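(* $\mathsf{ICM}$ equals the variety generated by the class $\mathsf{ICF}$ of implicitly closed fields, and the term $t(x,y,z)=x(x-y)(x-y)^*+z(1-(x-y)(x-y)^* )$ satisfies, for every $\mathbf A\in\mathsf{ICF}$ and $a,b,c\in A$, $t^{\mathbf A}(a,b,c)=c$ if $a=b$ and $t^{\mathbf A}(a,b,c)=a$ otherwise. Consequently $\mathsf{ICM}$ is a discriminator variety.
   Context: A field is weakly rooted if it has characteristic $0$, or has prime characteristic $p$ and every element has a $p$-th root. Weak inverse: $a^*=a^{-1}$ if $a\ne0$, $0^*=0$. Weak $p$-root (in a weakly rooted field, $p$ prime): $r_p(a)=\sqrt[p]{a}$ if the characteristic is $p$, and $0$ otherwise. An implicitly closed field is a weakly rooted field (ring language) expanded by $(\,)^*$ and all $r_p$; $\mathsf{ICF}$ is their class. $\mathsf{ICM}$ is the class of algebras isomorphic to subalgebras of direct products of members of $\mathsf{ICF}$. A variety is a discriminator variety if it is generated by a class $\mathsf K$ admitting a term $t(x,y,z)$ with $t^{\mathbf A}(a,b,c)=c$ if $a=b$ and $=a$ otherwise, for all $\mathbf A\in\mathsf K$. *)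

theory Defs
  imports "HOL-Algebra.Ring" "HOL-Computational_Algebra.Primes"
begin

text \<open>Signature: 0, 1, binary +, unary -, binary *, the weak inverse ( )^*, and
  for every prime p the unary weak p-root r_p.  The component ic_root p is only
  relevant for prime p (homomorphisms/subalgebras only refer to prime p).\<close>

record 'a icalg =
  ic_carrier :: "'a set"
  ic_zero :: 'a
  ic_one :: 'a
  ic_add :: "'a \<Rightarrow> 'a \<Rightarrow> 'a"
  ic_neg :: "'a \<Rightarrow> 'a"
  ic_mul :: "'a \<Rightarrow> 'a \<Rightarrow> 'a"
  ic_star :: "'a \<Rightarrow> 'a"
  ic_root :: "nat \<Rightarrow> 'a \<Rightarrow> 'a"

definition ic_closed :: "'a icalg \<Rightarrow> 'a set \<Rightarrow> bool" where
  "ic_closed A S \<longleftrightarrow>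
     ic_zero A \<in> S \<and> ic_one A \<in> S \<and>
     (\<forall>x\<in>S. \<forall>y\<in>S. ic_add A x y \<in> S \<and> ic_mul A x y \<in> S) \<and>
     (\<forall>x\<in>S. ic_neg A x \<in> S \<and> ic_star A x \<in> S) \<and>
     (\<forall>p. prime p \<longrightarrow> (\<forall>x\<in>S. ic_root A p x \<in> S))"

definition ic_alg :: "'a icalg \<Rightarrow> bool" where
  "ic_alg A \<longleftrightarrow> ic_closed A (ic_carrier A)"

definition ic_hom :: "('a \<Rightarrow> 'b) \<Rightarrow> 'a icalg \<Rightarrow> 'b icalg \<Rightarrow> bool" where
  "ic_hom h A B \<longleftrightarrow>
     (\<forall>x\<in>ic_carrier A. h x \<in> ic_carrier B) \<and>
     h (ic_zero A) = ic_zero B \<and> h (ic_one A) = ic_one B \<and>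
     (\<forall>x\<in>ic_carrier A. \<forall>y\<in>ic_carrier A.
        h (ic_add A x y) = ic_add B (h x) (h y) \<and> h (ic_mul A x y) = ic_mul B (h x) (h y)) \<and>
     (\<forall>x\<in>ic_carrier A. h (ic_neg A x) = ic_neg B (h x) \<and> h (ic_star A x) = ic_star B (h x)) \<and>
     (\<forall>p. prime p \<longrightarrow> (\<forall>x\<in>ic_carrier A. h (ic_root A p x) = ic_root B p (h x)))"

definition ic_prod :: "'i set \<Rightarrow> ('i \<Rightarrow> 'k icalg) \<Rightarrow> ('i \<Rightarrow> 'k) icalg" where
  "ic_prod I F =
    \<lparr> ic_carrier = (\<Pi>\<^sub>E i\<in>I. ic_carrier (F i)),
      ic_zero = (\<lambda>i\<in>I. ic_zero (F i)),
      ic_one = (\<lambda>i\<in>I. ic_one (F i)),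
      ic_add = (\<lambda>f g. \<lambda>i\<in>I. ic_add (F i) (f i) (g i)),
      ic_neg = (\<lambda>f. \<lambda>i\<in>I. ic_neg (F i) (f i)),
      ic_mul = (\<lambda>f g. \<lambda>i\<in>I. ic_mul (F i) (f i) (g i)),
      ic_star = (\<lambda>f. \<lambda>i\<in>I. ic_star (F i) (f i)),
      ic_root = (\<lambda>p f. \<lambda>i\<in>I. ic_root (F i) p (f i)) \<rparr>"

definition to_ring :: "'a icalg \<Rightarrow> 'a ring" where
  "to_ring A = \<lparr> carrier = ic_carrier A, monoid.mult = ic_mul A, monoid.one = ic_one A,
                 ring.zero = ic_zero A, ring.add = ic_add A \<rparr>"

definition rchar :: "('a, 'm) ring_scheme \<Rightarrow> nat" where
  "rchar R = (if \<exists>n::nat>0. [n] \<cdot>\<^bsub>R\<^esub> \<one>\<^bsub>R\<^esub> = \<zero>\<^bsub>R\<^esub>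
                  then (LEAST n::nat. n > 0 \<and> [n] \<cdot>\<^bsub>R\<^esub> \<one>\<^bsub>R\<^esub> = \<zero>\<^bsub>R\<^esub>) else 0)"

definition weakly_rooted :: "('a, 'm) ring_scheme \<Rightarrow> bool" where
  "weakly_rooted R \<longleftrightarrow> field R \<and>
     (rchar R = 0 \<or>
      (prime (rchar R) \<and> (\<forall>a\<in>carrier R. \<exists>r\<in>carrier R. r [^]\<^bsub>R\<^esub> rchar R = a)))"

definition ICF :: "'a icalg \<Rightarrow> bool" where
  "ICF A \<longleftrightarrow>
     (let R = to_ring A in
       weakly_rooted R \<and>
       (\<forall>x\<in>carrier R. ic_neg A x = \<ominus>\<^bsub>R\<^esub> x) \<and>
       (\<forall>x\<in>carrier R. ic_star A x = (if x = \<zero>\<^bsub>R\<^esub> then \<zero>\<^bsub>R\<^esub> else inv\<^bsub>R\<^esub> x)) \<and>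
       (\<forall>p. prime p \<longrightarrow> (\<forall>a\<in>carrier R.
          ic_root A p a = (if rchar R = p then (THE r. r \<in> carrier R \<and> r [^]\<^bsub>R\<^esub> p = a)
                           else \<zero>\<^bsub>R\<^esub>))))"

definition ISP_via :: "('k icalg \<Rightarrow> bool) \<Rightarrow> 'i set \<Rightarrow> ('i \<Rightarrow> 'k icalg) \<Rightarrow> 'a icalg \<Rightarrow> bool" where
  "ISP_via K I F A \<longleftrightarrow> ic_alg A \<and> (\<forall>i\<in>I. K (F i)) \<and>
     (\<exists>h. ic_hom h A (ic_prod I F) \<and> inj_on h (ic_carrier A))"

definition HSP_via :: "('k icalg \<Rightarrow> bool) \<Rightarrow> 'i set \<Rightarrow> ('i \<Rightarrow> 'k icalg) \<Rightarrow> 'a icalg \<Rightarrow> bool" where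
  "HSP_via K I F A \<longleftrightarrow> ic_alg A \<and> (\<forall>i\<in>I. K (F i)) \<and>
     (\<exists>S h. S \<subseteq> ic_carrier (ic_prod I F) \<and> ic_closed (ic_prod I F) S \<and>
            ic_hom h ((ic_prod I F)\<lparr>ic_carrier := S\<rparr>) A \<and> h ` S = ic_carrier A)"

definition disc_t :: "'a icalg \<Rightarrow> 'a \<Rightarrow> 'a \<Rightarrow> 'a \<Rightarrow> 'a" where
  "disc_t A x y z =
     (let d = ic_add A x (ic_neg A y); e = ic_mul A d (ic_star A d) in
      ic_add A (ic_mul A x e) (ic_mul A z (ic_add A (ic_one A) (ic_neg A e))))"

definition is_discriminator_term ::
    "('a icalg \<Rightarrow> bool) \<Rightarrow> ('a icalg \<Rightarrow> 'a \<Rightarrow> 'a \<Rightarrow> 'a \<Rightarrow> 'a) \<Rightarrow> bool" where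
  "is_discriminator_term K t \<longleftrightarrow>
     (\<forall>A. K A \<longrightarrow> (\<forall>a\<in>ic_carrier A. \<forall>b\<in>ic_carrier A. \<forall>c\<in>ic_carrier A.
        t A a b c = (if a = b then c else a)))"

end

theory Submission
  imports Defs "HOL-Algebra.QuotRing" "HOL-Algebra.Ring_Divisibility"
begin

context cring begin

lemma binomial_cring:
  assumes a: "a \<in> carrier R" and b: "b \<in> carrier R"
  shows "(a \<oplus> b) [^] (n::nat) = (\<Oplus>k\<in>{..n}. [(n choose k)] \<cdot> (a [^] k \<otimes> b [^] (n - k)))"
proof (induction n)
  case 0
  then show ?case using a b by simp
next
  case (Suc n)
  define S where "S = (\<Oplus>k\<in>{..n}. [(n choose k)] \<cdot> (a [^] k \<otimes> b [^] (n - k)))"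
  have Sc: "S \<in> carrier R" unfolding S_def using a b by (intro finsum_closed) auto
  have "(a \<oplus> b) [^] Suc n = S \<otimes> a \<oplus> S \<otimes> b"
    using Suc a b Sc by (simp add: S_def[symmetric] r_distr)
  moreover have Sa: "S \<otimes> a = (\<Oplus>k\<in>{..n}. [(n choose k)] \<cdot> (a [^] Suc k \<otimes> b [^] (n - k)))"
    unfolding S_def using a b
    apply (subst finsum_ldistr) apply auto
    apply (intro finsum_cong') apply auto
    apply (subst add_pow_ldistr) apply auto
    by (metis m_assoc m_comm nat_pow_Suc nat_pow_closed)
  moreover have Sb: "S \<otimes> b = (\<Oplus>k\<in>{..n}. [(n choose Suc k)] \<cdot> (a [^] Suc k \<otimes> b [^] (n - k))) \<oplus> b [^] Suc n"
  proof -
    have "S \<otimes> b = (\<Oplus>k\<in>{..n}. [(n choose k)] \<cdot> (a [^] k \<otimes> b [^] (Suc n - k)))"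
      unfolding S_def using a b
      apply (subst finsum_ldistr) apply auto
      apply (intro finsum_cong') apply auto
      apply (subst add_pow_ldistr) apply auto
      by (metis Suc_diff_le m_assoc nat_pow_Suc nat_pow_closed)
    also have "\<dots> = (\<Oplus>k\<in>{..Suc n}. [(n choose k)] \<cdot> (a [^] k \<otimes> b [^] (Suc n - k)))"
      using a b by (subst finsum_Suc) (auto simp: binomial_eq_0)
    also have "\<dots> = (\<Oplus>k\<in>{..n}. [(n choose Suc k)] \<cdot> (a [^] Suc k \<otimes> b [^] (Suc n - Suc k))) \<oplus> b [^] Suc n"
      using a b by (subst finsum_Suc2) auto
    finally show ?thesis by simp
  qed
  moreover have "(\<Oplus>k\<in>{..Suc n}. [(Suc n choose k)] \<cdot> (a [^] k \<otimes> b [^] (Suc n - k)))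
     = (\<Oplus>k\<in>{..n}. [(Suc n choose Suc k)] \<cdot> (a [^] Suc k \<otimes> b [^] (Suc n - Suc k))) \<oplus> b [^] Suc n"
    using a b by (subst finsum_Suc2) auto
  moreover have "(\<Oplus>k\<in>{..n}. [(Suc n choose Suc k)] \<cdot> (a [^] Suc k \<otimes> b [^] (Suc n - Suc k)))
     = (\<Oplus>k\<in>{..n}. [(n choose k)] \<cdot> (a [^] Suc k \<otimes> b [^] (n - k)) \<oplus>
       [(n choose Suc k)] \<cdot> (a [^] Suc k \<otimes> b [^] (n - k)))"
    using a b by (intro finsum_cong') (auto simp: add.nat_pow_mult)
  moreover have "(\<Oplus>k\<in>{..n}. [(n choose k)] \<cdot> (a [^] Suc k \<otimes> b [^] (n - k)) \<oplus>
       [(n choose Suc k)] \<cdot> (a [^] Suc k \<otimes> b [^] (n - k))) =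
     (\<Oplus>k\<in>{..n}. [(n choose k)] \<cdot> (a [^] Suc k \<otimes> b [^] (n - k))) \<oplus>
       (\<Oplus>k\<in>{..n}. [(n choose Suc k)] \<cdot> (a [^] Suc k \<otimes> b [^] (n - k)))"
    using a b by (intro finsum_addf) auto
  ultimately show ?case using a b
    by (simp add: a_assoc finsum_closed)
qed

lemma freshman:
  fixes p :: nat
  assumes a: "a \<in> carrier R" and b: "b \<in> carrier R" and p: "Factorial_Ring.prime p"
    and c: "[p] \<cdot> \<one> = \<zero>"
  shows "(a \<oplus> b) [^] p = a [^] p \<oplus> b [^] p"
proof -
  have z: "[(p choose k)] \<cdot> x = \<zero>" if kk: "0 < k" "k < p" and xx: "x \<in> carrier R" for k x
  proof -
    have "p dvd (p choose k)" using dvd_choose_prime[of k p] kk p by auto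
    then obtain m where m: "p choose k = p * m" by (elim dvdE)
    have "[p] \<cdot> x = \<zero>"
      using xx c add_pow_ldistr[of \<one> x p] by simp
    then show ?thesis using m xx add.nat_pow_pow[of x m p] by simp
  qed
  have pp: "p > 0" using p prime_gt_0_nat by blast
  have "{..p} = insert p (insert 0 {1..<p})" using pp by auto
  then have "(a \<oplus> b) [^] p = (\<Oplus>k\<in>insert p (insert 0 {1..<p}). [(p choose k)] \<cdot> (a [^] k \<otimes> b [^] (p - k)))"
    using binomial_cring[OF a b] by simp
  also have "\<dots> = a [^] p \<oplus> (b [^] p \<oplus> (\<Oplus>k\<in>{1..<p}. [(p choose k)] \<cdot> (a [^] k \<otimes> b [^] (p - k))))"
    using a b pp by (simp add: finsum_insert)
  also have "(\<Oplus>k\<in>{1..<p}. [(p choose k)] \<cdot> (a [^] k \<otimes> b [^] (p - k))) = (\<Oplus>k\<in>{1..<p}. \<zero>)"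
    using a b z by (intro finsum_cong') auto
  finally show ?thesis using a b by simp
qed

end

context "domain" begin

lemma pow_eq_zero_dom: "x \<in> carrier R \<Longrightarrow> x [^] (n::nat) = \<zero> \<Longrightarrow> x = \<zero>"
proof (induction n)
  case 0 then show ?case by simp
next
  case (Suc n) then show ?case using integral by auto
qed

lemma frob_inj:
  fixes p :: nat
  assumes a: "a \<in> carrier R" and b: "b \<in> carrier R" and p: "Factorial_Ring.prime p"
    and c: "[p] \<cdot> \<one> = \<zero>" and e: "a [^] p = b [^] p"
  shows "a = b"
proof -
  have "((a \<ominus> b) \<oplus> b) [^] p = (a \<ominus> b) [^] p \<oplus> b [^] p"
    using freshman[OF _ b p c] a b by simp
  moreover have ab: "(a \<ominus> b) \<oplus> b = a" using a b by algebra
  ultimately have "b [^] p = (a \<ominus> b) [^] p \<oplus> b [^] p" using e a b by simp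
  then have "(a \<ominus> b) [^] p = \<zero>" using a b add.r_cancel_one'[of "b [^] p" "(a \<ominus> b) [^] p"] by simp
  then have "a \<ominus> b = \<zero>" using pow_eq_zero_dom a b by blast
  then show ?thesis using a b ab by simp
qed

end

lemma rchar_pos_zero:
  fixes R (structure)
  assumes "rchar R > 0" shows "[rchar R] \<cdot> \<one> = \<zero>"
proof -
  have ex: "\<exists>n::nat>0. [n] \<cdot> \<one> = \<zero>" using assms unfolding rchar_def by (auto split: if_splits)
  then have "rchar R = (LEAST n::nat. n > 0 \<and> [n] \<cdot> \<one> = \<zero>)" unfolding rchar_def by simp
  then show ?thesis using LeastI_ex[OF ex] by simp
qed

lemma rchar_min:
  fixes R (structure)
  assumes "0 < n" "n < rchar R" shows "[n] \<cdot> \<one> \<noteq> \<zero>"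
proof
  assume n: "[n] \<cdot> \<one> = \<zero>"
  then have ex: "\<exists>n::nat>0. [n] \<cdot> \<one> = \<zero>" using assms by auto
  then have "rchar R = (LEAST n::nat. n > 0 \<and> [n] \<cdot> \<one> = \<zero>)" unfolding rchar_def by simp
  then have "rchar R \<le> n" using n assms(1) by (simp add: Least_le)
  then show False using assms by simp
qed

lemma rchar_zero_iff:
  fixes R (structure)
  shows "rchar R = 0 \<longleftrightarrow> (\<forall>n::nat>0. [n] \<cdot> \<one> \<noteq> \<zero>)"
proof
  assume "rchar R = 0"
  then show "\<forall>n::nat>0. [n] \<cdot> \<one> \<noteq> \<zero>" unfolding rchar_def
    by (smt (verit, ccfv_threshold) LeastI_ex not_gr0)
next
  assume "\<forall>n::nat>0. [n] \<cdot> \<one> \<noteq> \<zero>" then show "rchar R = 0" unfolding rchar_def by auto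
qed

lemma (in ring) rchar_dvd:
  assumes "[n] \<cdot> \<one> = \<zero>" shows "rchar R dvd n"
proof (cases "n = 0")
  case True then show ?thesis by simp
next
  case False
  then have q0: "rchar R > 0" using assms rchar_zero_iff[of R] by auto
  define q where "q = rchar R"
  have "[n] \<cdot> \<one> = [(n mod q)] \<cdot> \<one> \<oplus> [(q * (n div q))] \<cdot> \<one>"
    using add.nat_pow_mult[of \<one> "n mod q" "q * (n div q)"] by simp
  also have "[(q * (n div q))] \<cdot> \<one> = \<zero>"
    using add.nat_pow_pow[of \<one> "n div q" q] rchar_pos_zero[OF q0] q_def by (simp add: mult.commute)
  finally have "[(n mod q)] \<cdot> \<one> = \<zero>" using assms by simp
  moreover have "n mod q < q" using q0 q_def by simp
  ultimately have "n mod q = 0" using rchar_min[of "n mod q" R] q_def by auto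
  then show ?thesis using q_def by auto
qed

lemma (in ring) add_pow_one_mult: "[((a::nat) * b)] \<cdot> \<one> = [a] \<cdot> \<one> \<otimes> [b] \<cdot> \<one>"
  using add_pow_rdistr[of "[a] \<cdot> \<one>" \<one> b] add.nat_pow_pow[of \<one> a b] add.nat_pow_pow[of \<one> b a] by (simp add: mult.commute)

lemma (in "domain") rchar_prime: "rchar R = 0 \<or> Factorial_Ring.prime (rchar R)"
proof (cases "rchar R = 0")
  case False
  define q where "q = rchar R"
  then have q0: "q > 0" using False by simp
  have z: "[q] \<cdot> \<one> = \<zero>" using rchar_pos_zero q0 q_def by simp
  have "q \<noteq> 1" using z by auto
  moreover have "m = 1 \<or> m = q" if md: "m dvd q" for m
  proof -
    obtain k where k: "q = m * k" using md by (elim dvdE)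
    then have "m > 0" "k > 0" using q0 by auto
    have "[m] \<cdot> \<one> \<otimes> [k] \<cdot> \<one> = \<zero>" using z k add_pow_one_mult by simp
    then have "[m] \<cdot> \<one> = \<zero> \<or> [k] \<cdot> \<one> = \<zero>" using integral by auto
    then have "m \<ge> q \<or> k \<ge> q" using rchar_min[of m R] rchar_min[of k R] \<open>m>0\<close> \<open>k>0\<close> q_def
      by (meson not_le)
    then show ?thesis
    proof
      assume "m \<ge> q"
      moreover have "m \<le> q" using k \<open>k>0\<close> by simp
      ultimately show ?thesis by simp
    next
      assume kq: "k \<ge> q"
      show ?thesis
      proof (rule ccontr)
        assume "\<not> ?thesis"
        then have "m \<ge> 2" using \<open>m>0\<close> by simp
        then have "m * k \<ge> 2 * k" by simp
        then show False using kq k \<open>k>0\<close> by simp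
      qed
    qed
  qed
  ultimately have "Factorial_Ring.prime q" using q0 prime_nat_iff by auto
  then show ?thesis using q_def by simp
qed simp

lemma (in ring) rchar_ne_prime:
  assumes "Factorial_Ring.prime p" "rchar R \<noteq> p" "\<one> \<noteq> \<zero>" shows "[p] \<cdot> \<one> \<noteq> \<zero>"
proof
  assume z: "[p] \<cdot> \<one> = \<zero>"
  then have "rchar R dvd p" by (rule rchar_dvd)
  moreover have "rchar R \<noteq> 1" using rchar_pos_zero[of R] assms(3) by fastforce
  ultimately show False using assms prime_nat_iff by blast
qed

lemma (in ring) rchar_eq_zero: "Factorial_Ring.prime p \<Longrightarrow> rchar R = p \<Longrightarrow> [p] \<cdot> \<one> = \<zero>"
  using rchar_pos_zero[of R] prime_gt_0_nat[of p] by simp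

datatype tm = V nat | Zr | On | Ad tm tm | Ng tm | Mu tm tm | St tm | Rt nat tm

fun ev :: "'a icalg \<Rightarrow> (nat \<Rightarrow> 'a) \<Rightarrow> tm \<Rightarrow> 'a" where
  "ev A r (V n) = r n"
| "ev A r Zr = ic_zero A"
| "ev A r On = ic_one A"
| "ev A r (Ad s t) = ic_add A (ev A r s) (ev A r t)"
| "ev A r (Ng t) = ic_neg A (ev A r t)"
| "ev A r (Mu s t) = ic_mul A (ev A r s) (ev A r t)"
| "ev A r (St t) = ic_star A (ev A r t)"
| "ev A r (Rt p t) = ic_root A p (ev A r t)"

fun wft :: "tm \<Rightarrow> bool" where
  "wft (Ad s t) = (wft s \<and> wft t)"
| "wft (Mu s t) = (wft s \<and> wft t)"
| "wft (Ng t) = wft t"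
| "wft (St t) = wft t"
| "wft (Rt p t) = (Factorial_Ring.prime p \<and> wft t)"
| "wft _ = True"

fun Nm :: "nat \<Rightarrow> tm" where
  "Nm 0 = Zr" | "Nm (Suc n) = Ad (Nm n) On"

fun pw :: "tm \<Rightarrow> nat \<Rightarrow> tm" where
  "pw t 0 = On" | "pw t (Suc n) = Mu (pw t n) t"

lemma wft_Nm[simp]: "wft (Nm n)" by (induction n) auto
lemma wft_pw[simp]: "wft t \<Longrightarrow> wft (pw t n)" by (induction n) auto

lemma ev_closed: "ic_closed A C \<Longrightarrow> (\<forall>n. r n \<in> C) \<Longrightarrow> wft t \<Longrightarrow> ev A r t \<in> C"
  by (induction t) (auto simp: ic_closed_def)

lemma ev_hom:
  assumes "ic_hom h A B" "ic_alg A" "\<forall>n. r n \<in> ic_carrier A"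
  shows "wft t \<Longrightarrow> h (ev A r t) = ev B (h \<circ> r) t"
proof (induction t)
  case (Ad s t) then show ?case using assms ev_closed[of A "ic_carrier A" r] by (auto simp: ic_hom_def ic_alg_def)
next
  case (Mu s t) then show ?case using assms ev_closed[of A "ic_carrier A" r] by (auto simp: ic_hom_def ic_alg_def)
next
  case (Ng t) then show ?case using assms ev_closed[of A "ic_carrier A" r] by (auto simp: ic_hom_def ic_alg_def)
next
  case (St t) then show ?case using assms ev_closed[of A "ic_carrier A" r] by (auto simp: ic_hom_def ic_alg_def)
next
  case (Rt p t) then show ?case using assms ev_closed[of A "ic_carrier A" r] by (auto simp: ic_hom_def ic_alg_def)
qed (use assms in \<open>auto simp: ic_hom_def\<close>)

lemma ev_upd: "ev (A\<lparr>ic_carrier := X\<rparr>) r t = ev A r t"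
  by (induction t) auto

lemma ev_prod: "i \<in> I \<Longrightarrow> ev (ic_prod I F) r t i = ev (F i) (\<lambda>n. r n i) t"
  by (induction t) (auto simp: ic_prod_def)

lemma ev_prod_ext: "(\<forall>n. r n \<in> extensional I) \<Longrightarrow> ev (ic_prod I F) r t \<in> extensional I"
  by (cases t) (auto simp: ic_prod_def)

lemma hsp_identity:
  assumes H: "HSP_via (ICF :: 'k icalg \<Rightarrow> bool) I F A" and w: "wft t1" "wft t2"
    and idt: "\<And>(B :: 'k icalg) r. ICF B \<Longrightarrow> (\<forall>n. r n \<in> ic_carrier B) \<Longrightarrow> ev B r t1 = ev B r t2"
    and r: "\<forall>n. r n \<in> ic_carrier A"
  shows "ev A r t1 = ev A r t2"
proof -
  from H obtain S h where S: "S \<subseteq> ic_carrier (ic_prod I F)" "ic_closed (ic_prod I F) S"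
     and h: "ic_hom h ((ic_prod I F)\<lparr>ic_carrier := S\<rparr>) A" "h ` S = ic_carrier A"
     and FI: "\<forall>i\<in>I. ICF (F i)"
    unfolding HSP_via_def by blast
  define s where "s n = (SOME x. x \<in> S \<and> h x = r n)" for n
  have s: "s n \<in> S \<and> h (s n) = r n" for n
  proof -
    have "\<exists>x. x \<in> S \<and> h x = r n" using r h(2) by (metis imageE)
    then show ?thesis unfolding s_def by (rule someI_ex)
  qed
  have alg: "ic_alg ((ic_prod I F)\<lparr>ic_carrier := S\<rparr>)"
    using S(2) unfolding ic_alg_def ic_closed_def by (simp add: ic_prod_def)
  have hr: "h \<circ> s = r" using s by auto
  have e: "ev A r t = h (ev (ic_prod I F) s t)" if "wft t" for t
    using ev_hom[OF h(1) alg, of s t] s that hr ev_upd[where A="ic_prod I F" and X=S and r=s and t=t] by auto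
  have ext: "\<forall>n. s n \<in> extensional I" using s S(1) by (auto simp: ic_prod_def PiE_def)
  have "ev (ic_prod I F) s t1 = ev (ic_prod I F) s t2"
  proof (rule extensionalityI[OF ev_prod_ext[OF ext] ev_prod_ext[OF ext]])
    fix i assume i: "i \<in> I"
    have "\<forall>n. s n i \<in> ic_carrier (F i)" using s S(1) i by (auto simp: ic_prod_def PiE_def)
    then have "ev (F i) (\<lambda>n. s n i) t1 = ev (F i) (\<lambda>n. s n i) t2"
      using idt FI i by auto
    then show "ev (ic_prod I F) s t1 i = ev (ic_prod I F) s t2 i"
      using ev_prod[OF i, of F s] by simp
  qed
  then show ?thesis using e w by simp
qed

lemma tr: "ic_add B x y = x \<oplus>\<^bsub>to_ring B\<^esub> y" "ic_mul B x y = x \<otimes>\<^bsub>to_ring B\<^esub> y"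
  "ic_zero B = \<zero>\<^bsub>to_ring B\<^esub>" "ic_one B = \<one>\<^bsub>to_ring B\<^esub>" "ic_carrier B = carrier (to_ring B)"
  by (simp_all add: to_ring_def)

lemma ev_Nm: "ev B r (Nm n) = [n] \<cdot>\<^bsub>to_ring B\<^esub> \<one>\<^bsub>to_ring B\<^esub>"
  by (induction n) (auto simp: add_pow_def to_ring_def)

lemma ev_pw: "ev B r (pw t n) = ev B r t [^]\<^bsub>to_ring B\<^esub> n"
  by (induction n) (auto simp: to_ring_def)

lemma ICF_field: "ICF B \<Longrightarrow> field (to_ring B)"
  by (simp add: ICF_def weakly_rooted_def Let_def)

lemma ICF_neg: "ICF B \<Longrightarrow> x \<in> carrier (to_ring B) \<Longrightarrow> ic_neg B x = \<ominus>\<^bsub>to_ring B\<^esub> x"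
  by (simp add: ICF_def Let_def)

lemma ICF_star: "ICF B \<Longrightarrow> x \<in> carrier (to_ring B) \<Longrightarrow>
   ic_star B x = (if x = \<zero>\<^bsub>to_ring B\<^esub> then \<zero>\<^bsub>to_ring B\<^esub> else inv\<^bsub>to_ring B\<^esub> x)"
  by (simp add: ICF_def Let_def)

lemma ICF_root0: "ICF B \<Longrightarrow> Factorial_Ring.prime p \<Longrightarrow> x \<in> carrier (to_ring B) \<Longrightarrow> rchar (to_ring B) \<noteq> p \<Longrightarrow>
   ic_root B p x = \<zero>\<^bsub>to_ring B\<^esub>"
  by (simp add: ICF_def Let_def)

lemma ICF_root:
  assumes B: "ICF B" and p: "Factorial_Ring.prime p" and x: "x \<in> carrier (to_ring B)" and c: "rchar (to_ring B) = p"
  shows "ic_root B p x \<in> carrier (to_ring B) \<and> ic_root B p x [^]\<^bsub>to_ring B\<^esub> p = x"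
proof -
  let ?R = "to_ring B"
  interpret field ?R using ICF_field[OF B] .
  have ex: "\<exists>r\<in>carrier ?R. r [^]\<^bsub>?R\<^esub> p = x"
    using B x c p unfolding ICF_def weakly_rooted_def Let_def by auto
  have z: "[p] \<cdot>\<^bsub>?R\<^esub> \<one>\<^bsub>?R\<^esub> = \<zero>\<^bsub>?R\<^esub>" using rchar_eq_zero[OF p c] .
  have ex1: "\<exists>!r. r \<in> carrier ?R \<and> r [^]\<^bsub>?R\<^esub> p = x"
    using ex frob_inj[OF _ _ p z] by blast
  have "ic_root B p x = (THE r. r \<in> carrier ?R \<and> r [^]\<^bsub>?R\<^esub> p = x)"
    using B x c p unfolding ICF_def Let_def by auto
  then show ?thesis using theI'[OF ex1] by simp
qed

lemma ICF_alg: assumes B: "ICF B" shows "ic_alg B"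
proof -
  let ?R = "to_ring B"
  interpret field ?R using ICF_field[OF B] .
  have "ic_root B p x \<in> carrier ?R" if "Factorial_Ring.prime p" "x \<in> carrier ?R" for p x
    using ICF_root[OF B that] ICF_root0[OF B that] by (cases "rchar ?R = p") auto
  then show ?thesis unfolding ic_alg_def ic_closed_def
    using ICF_neg[OF B] ICF_star[OF B] field_Units
    by (auto simp: tr)
qed

abbreviation "vx \<equiv> V 0"
abbreviation "vy \<equiv> V (Suc 0)"
abbreviation "vz \<equiv> V 2"

definition "cp p = Mu (Nm p) (St (Nm p))"

definition idents0 :: "(tm \<times> tm) set" where
  "idents0 = {(Ad (Ad vx vy) vz, Ad vx (Ad vy vz)), (Ad vx vy, Ad vy vx), (Ad Zr vx, vx),
     (Ad (Ng vx) vx, Zr), (Mu (Mu vx vy) vz, Mu vx (Mu vy vz)), (Mu vx vy, Mu vy vx), (Mu On vx, vx),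
     (Mu (Ad vx vy) vz, Ad (Mu vx vz) (Mu vy vz)), (Mu (Mu vx (St vx)) vx, vx),
     (Mu (Mu (St vx) vx) (St vx), St vx)}"
definition idents1 :: "(tm \<times> tm) set" where
  "idents1 = {(pw (Rt p vx) p, Mu vx (Ad On (Ng (cp p)))) | p. Factorial_Ring.prime p}"
definition idents2 :: "(tm \<times> tm) set" where
  "idents2 = {(Mu (Rt p vx) (Nm p), Zr) | p. Factorial_Ring.prime p}"
definition "idents = idents0 \<union> idents1 \<union> idents2"

lemma idents_wf: "(s, t) \<in> idents \<Longrightarrow> wft s \<and> wft t"
  by (auto simp: idents_def idents0_def idents1_def idents2_def cp_def)

lemma idents_ICF:
  assumes B: "ICF B" and r: "\<forall>n. r n \<in> ic_carrier B" and st: "(s, t) \<in> idents"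
  shows "ev B r s = ev B r t"
proof -
  let ?R = "to_ring B"
  interpret field ?R using ICF_field[OF B] .
  have r': "r n \<in> carrier ?R" for n using r by (simp add: tr)
  have st0: "ic_star B x \<in> carrier ?R" "x \<otimes>\<^bsub>?R\<^esub> ic_star B x \<otimes>\<^bsub>?R\<^esub> x = x"
    "ic_star B x \<otimes>\<^bsub>?R\<^esub> x \<otimes>\<^bsub>?R\<^esub> ic_star B x = ic_star B x"
    if "x \<in> carrier ?R" for x
  proof -
    show "ic_star B x \<in> carrier ?R" using ICF_star[OF B that] that field_Units by auto
    show "x \<otimes>\<^bsub>?R\<^esub> ic_star B x \<otimes>\<^bsub>?R\<^esub> x = x"
      using ICF_star[OF B that] that field_Units by auto
    show "ic_star B x \<otimes>\<^bsub>?R\<^esub> x \<otimes>\<^bsub>?R\<^esub> ic_star B x = ic_star B x"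
      using ICF_star[OF B that] that field_Units by auto
  qed
  have rt: "ev B r (pw (Rt p vx) p) = ev B r (Mu vx (Ad On (Ng (cp p))))
        \<and> ev B r (Mu (Rt p vx) (Nm p)) = ev B r Zr" if p: "Factorial_Ring.prime p" for p
  proof (cases "rchar ?R = p")
    case True
    have z: "[p] \<cdot>\<^bsub>?R\<^esub> \<one>\<^bsub>?R\<^esub> = \<zero>\<^bsub>?R\<^esub>" using rchar_eq_zero[OF p True] .
    then show ?thesis using ICF_root[OF B p r'[of 0] True] r' ICF_star[OF B] ICF_neg[OF B]
      by (simp add: ev_pw ev_Nm cp_def tr)
  next
    case False
    have z: "[p] \<cdot>\<^bsub>?R\<^esub> \<one>\<^bsub>?R\<^esub> \<noteq> \<zero>\<^bsub>?R\<^esub>" using rchar_ne_prime[OF p False] by simp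
    have pc: "[p] \<cdot>\<^bsub>?R\<^esub> \<one>\<^bsub>?R\<^esub> \<in> carrier ?R" by simp
    have "p \<noteq> 0" using p by auto
    then show ?thesis using ICF_root0[OF B p r'[of 0] False] r' ICF_star[OF B] ICF_neg[OF B] z pc field_Units
      by (simp add: ev_pw ev_Nm cp_def tr nat_pow_zero r_neg)
  qed
  from st consider (a) "(s, t) \<in> idents0" | (b) "(s, t) \<in> idents1" | (c) "(s, t) \<in> idents2"
    unfolding idents_def by fast
  then show ?thesis
  proof cases
    case a
    then show ?thesis unfolding idents0_def
      apply (elim insertE emptyE)
      apply (simp_all add: tr ICF_neg[OF B] r' st0)
      by (simp_all add: a_ac m_ac l_distr r_distr r_neg r')
  next
    case b then obtain p where "Factorial_Ring.prime p" "s = pw (Rt p vx) p" "t = Mu vx (Ad On (Ng (cp p)))"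
      unfolding idents1_def by auto
    then show ?thesis using rt by simp
  next
    case c then obtain p where "Factorial_Ring.prime p" "s = Mu (Rt p vx) (Nm p)" "t = Zr"
      unfolding idents2_def by auto
    then show ?thesis using rt by simp
  qed
qed

lemma HSP_ids:
  assumes "HSP_via (ICF :: 'k icalg \<Rightarrow> bool) I F A" "(s, t) \<in> idents" "\<forall>n. r n \<in> ic_carrier A"
  shows "ev A r s = ev A r t"
  using hsp_identity[OF assms(1) _ _ _ assms(3), of s t] idents_wf[OF assms(2)] idents_ICF[OF _ _ assms(2)]
  by blast

locale icm =
  fixes A :: "'a icalg"
  assumes alg: "ic_alg A"
    and ids: "\<And>s t r. (s, t) \<in> idents \<Longrightarrow> \<forall>n. r n \<in> ic_carrier A \<Longrightarrow> ev A r s = ev A r t"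
begin

abbreviation "R \<equiv> to_ring A"

lemma cl: "ic_closed A (ic_carrier A)" using alg by (simp add: ic_alg_def)

lemma ids3:
  assumes "x \<in> ic_carrier A" "y \<in> ic_carrier A" "z \<in> ic_carrier A" "(s, t) \<in> idents"
  shows "ev A (\<lambda>n. if n = 0 then x else if n = Suc 0 then y else z) s =
         ev A (\<lambda>n. if n = 0 then x else if n = Suc 0 then y else z) t"
  by (rule ids[OF assms(4)]) (use assms in auto)

lemma cr: "cring R"
proof (rule cringI)
  show "abelian_group R"
  proof (rule abelian_groupI)
    fix x y z assume xyz: "x \<in> carrier R" "y \<in> carrier R" "z \<in> carrier R"
    show "x \<oplus>\<^bsub>R\<^esub> y \<in> carrier R" using cl xyz by (simp add: ic_closed_def to_ring_def)
    show "x \<oplus>\<^bsub>R\<^esub> y \<oplus>\<^bsub>R\<^esub> z = x \<oplus>\<^bsub>R\<^esub> (y \<oplus>\<^bsub>R\<^esub> z)"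
      using ids3[of x y z "Ad (Ad vx vy) vz" "Ad vx (Ad vy vz)"] xyz
      by (simp add: idents_def idents0_def to_ring_def)
    show "x \<oplus>\<^bsub>R\<^esub> y = y \<oplus>\<^bsub>R\<^esub> x"
      using ids3[of x y x "Ad vx vy" "Ad vy vx"] xyz
      by (simp add: idents_def idents0_def to_ring_def)
    show "\<zero>\<^bsub>R\<^esub> \<oplus>\<^bsub>R\<^esub> x = x"
      using ids3[of x x x "Ad Zr vx" "vx"] xyz
      by (simp add: idents_def idents0_def to_ring_def)
    show "\<exists>y\<in>carrier R. y \<oplus>\<^bsub>R\<^esub> x = \<zero>\<^bsub>R\<^esub>"
      using ids3[of x x x "Ad (Ng vx) vx" "Zr"] xyz cl
      by (auto simp: idents_def idents0_def to_ring_def ic_closed_def)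
  next
    show "\<zero>\<^bsub>R\<^esub> \<in> carrier R" using cl by (simp add: ic_closed_def to_ring_def)
  qed
next
  show "comm_monoid R"
  proof (rule comm_monoidI)
    fix x y z assume xyz: "x \<in> carrier R" "y \<in> carrier R" "z \<in> carrier R"
    show "x \<otimes>\<^bsub>R\<^esub> y \<in> carrier R" using cl xyz by (simp add: ic_closed_def to_ring_def)
    show "x \<otimes>\<^bsub>R\<^esub> y \<otimes>\<^bsub>R\<^esub> z = x \<otimes>\<^bsub>R\<^esub> (y \<otimes>\<^bsub>R\<^esub> z)"
      using ids3[of x y z "Mu (Mu vx vy) vz" "Mu vx (Mu vy vz)"] xyz
      by (simp add: idents_def idents0_def to_ring_def)
    show "x \<otimes>\<^bsub>R\<^esub> y = y \<otimes>\<^bsub>R\<^esub> x"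
      using ids3[of x y x "Mu vx vy" "Mu vy vx"] xyz
      by (simp add: idents_def idents0_def to_ring_def)
    show "\<one>\<^bsub>R\<^esub> \<otimes>\<^bsub>R\<^esub> x = x"
      using ids3[of x x x "Mu On vx" "vx"] xyz
      by (simp add: idents_def idents0_def to_ring_def)
  next
    show "\<one>\<^bsub>R\<^esub> \<in> carrier R" using cl by (simp add: ic_closed_def to_ring_def)
  qed
next
  fix x y z assume xyz: "x \<in> carrier R" "y \<in> carrier R" "z \<in> carrier R"
  show "(x \<oplus>\<^bsub>R\<^esub> y) \<otimes>\<^bsub>R\<^esub> z = x \<otimes>\<^bsub>R\<^esub> z \<oplus>\<^bsub>R\<^esub> y \<otimes>\<^bsub>R\<^esub> z"
    using ids3[of x y z "Mu (Ad vx vy) vz" "Ad (Mu vx vz) (Mu vy vz)"] xyz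
    by (simp add: idents_def idents0_def to_ring_def)
qed

sublocale R: cring R by (rule cr)

lemma neg_closed: "x \<in> carrier R \<Longrightarrow> ic_neg A x \<in> carrier R"
  using cl by (simp add: ic_closed_def to_ring_def)

lemma star_closed: "x \<in> carrier R \<Longrightarrow> ic_star A x \<in> carrier R"
  using cl by (simp add: ic_closed_def to_ring_def)

lemma root_closed: "Factorial_Ring.prime p \<Longrightarrow> x \<in> carrier R \<Longrightarrow> ic_root A p x \<in> carrier R"
  using cl by (simp add: ic_closed_def to_ring_def)

lemma neg_eq: "x \<in> carrier R \<Longrightarrow> ic_neg A x = \<ominus>\<^bsub>R\<^esub> x"
  using ids3[of x x x "Ad (Ng vx) vx" "Zr"] neg_closed[of x]
  by (intro R.minus_equality[symmetric]) (simp_all add: idents_def idents0_def to_ring_def)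

lemma star1: "x \<in> carrier R \<Longrightarrow> x \<otimes>\<^bsub>R\<^esub> ic_star A x \<otimes>\<^bsub>R\<^esub> x = x"
  using ids3[of x x x "Mu (Mu vx (St vx)) vx" "vx"]
  by (simp add: idents_def idents0_def to_ring_def)

lemma star2: "x \<in> carrier R \<Longrightarrow> ic_star A x \<otimes>\<^bsub>R\<^esub> x \<otimes>\<^bsub>R\<^esub> ic_star A x = ic_star A x"
  using ids3[of x x x "Mu (Mu (St vx) vx) (St vx)" "St vx"]
  by (simp add: idents_def idents0_def to_ring_def)

definition "chp (p::nat) = [p] \<cdot>\<^bsub>R\<^esub> \<one>\<^bsub>R\<^esub>"

lemma chp_closed: "chp p \<in> carrier R" by (simp add: chp_def)

lemma root1: assumes "Factorial_Ring.prime p" "x \<in> carrier R"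
  shows "ic_root A p x [^]\<^bsub>R\<^esub> p = x \<otimes>\<^bsub>R\<^esub> (\<one>\<^bsub>R\<^esub> \<ominus>\<^bsub>R\<^esub> chp p \<otimes>\<^bsub>R\<^esub> ic_star A (chp p))"
proof -
  have "(pw (Rt p vx) p, Mu vx (Ad On (Ng (cp p)))) \<in> idents"
    using assms by (auto simp: idents_def idents1_def)
  from ids3[OF _ _ _ this, of x x x] assms
  have "ev A (\<lambda>n. x) (pw (Rt p vx) p) = ev A (\<lambda>n. x) (Mu vx (Ad On (Ng (cp p))))"
    by (simp add: to_ring_def cong: if_cong)
  then show ?thesis using assms
    by (simp add: ev_pw ev_Nm cp_def chp_def neg_eq star_closed R.minus_eq tr)
qed

lemma root2: assumes "Factorial_Ring.prime p" "x \<in> carrier R"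
  shows "ic_root A p x \<otimes>\<^bsub>R\<^esub> chp p = \<zero>\<^bsub>R\<^esub>"
proof -
  have "(Mu (Rt p vx) (Nm p), Zr) \<in> idents"
    using assms by (auto simp: idents_def idents2_def)
  from ids3[OF _ _ _ this, of x x x] assms
  have "ev A (\<lambda>n. x) (Mu (Rt p vx) (Nm p)) = ev A (\<lambda>n. x) Zr"
    by (simp add: to_ring_def cong: if_cong)
  then show ?thesis using assms
    by (simp add: ev_pw ev_Nm cp_def chp_def tr)
qed

end

lemma HSP_icm: "HSP_via (ICF :: 'k icalg \<Rightarrow> bool) I F A \<Longrightarrow> icm A"
  unfolding icm_def using HSP_ids[of I F A] by (auto simp: HSP_via_def)

context icm begin

lemma colon_ideal:
  assumes M: "ideal M R" and c: "c \<in> carrier R"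
  shows "ideal {y \<in> carrier R. y \<otimes>\<^bsub>R\<^esub> c \<in> M} R"
proof (rule idealI)
  interpret M: ideal M R by (rule M)
  show "ring R" by (rule R.ring_axioms)
  show "subgroup {y \<in> carrier R. y \<otimes>\<^bsub>R\<^esub> c \<in> M} (add_monoid R)"
  proof (rule R.add.subgroupI)
    show "{y \<in> carrier R. y \<otimes>\<^bsub>R\<^esub> c \<in> M} \<subseteq> carrier R" by auto
    show "{y \<in> carrier R. y \<otimes>\<^bsub>R\<^esub> c \<in> M} \<noteq> {}" using c by (auto intro!: exI[of _ "\<zero>\<^bsub>R\<^esub>"])
    fix a b assume a: "a \<in> {y \<in> carrier R. y \<otimes>\<^bsub>R\<^esub> c \<in> M}" and b: "b \<in> {y \<in> carrier R. y \<otimes>\<^bsub>R\<^esub> c \<in> M}"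
    show "\<ominus>\<^bsub>R\<^esub> a \<in> {y \<in> carrier R. y \<otimes>\<^bsub>R\<^esub> c \<in> M}"
      using a c M.a_inv_closed[of "a \<otimes>\<^bsub>R\<^esub> c"] by (simp add: R.l_minus)
    show "a \<oplus>\<^bsub>R\<^esub> b \<in> {y \<in> carrier R. y \<otimes>\<^bsub>R\<^esub> c \<in> M}"
      using a b c M.a_closed[of "a \<otimes>\<^bsub>R\<^esub> c" "b \<otimes>\<^bsub>R\<^esub> c"] by (simp add: R.l_distr)
  qed
  fix a x assume a: "a \<in> {y \<in> carrier R. y \<otimes>\<^bsub>R\<^esub> c \<in> M}" and x: "x \<in> carrier R"
  show "x \<otimes>\<^bsub>R\<^esub> a \<in> {y \<in> carrier R. y \<otimes>\<^bsub>R\<^esub> c \<in> M}"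
    using a x c M.I_l_closed[of "a \<otimes>\<^bsub>R\<^esub> c" x] by (simp add: R.m_assoc)
  show "a \<otimes>\<^bsub>R\<^esub> x \<in> {y \<in> carrier R. y \<otimes>\<^bsub>R\<^esub> c \<in> M}"
    using a x c M.I_l_closed[of "a \<otimes>\<^bsub>R\<^esub> c" x] by (simp add: R.m_assoc R.m_lcomm)
qed

definition emax :: "'a \<Rightarrow> 'a set \<Rightarrow> bool" where
  "emax e M \<longleftrightarrow> ideal M R \<and> e \<notin> M \<and> (\<forall>J. ideal J R \<and> e \<notin> J \<and> M \<subseteq> J \<longrightarrow> J = M)"

lemma emax_exists:
  assumes "e \<noteq> \<zero>\<^bsub>R\<^esub>" shows "\<exists>M. emax e M"
proof -
  let ?S = "{J. ideal J R \<and> e \<notin> J}"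
  have "{\<zero>\<^bsub>R\<^esub>} \<in> ?S" using assms R.zeroideal by auto
  then have ne: "?S \<noteq> {}" by blast
  have "\<Union>C \<in> ?S" if "C \<noteq> {}" "subset.chain ?S C" for C
  proof -
    have ch: "subset.chain {I. ideal I R} C" using that(2) unfolding pred_on.chain_def by auto
    have "ideal (\<Union>C) R" using R.chain_Union_is_ideal[OF ch] that(1) by simp
    moreover have "e \<notin> \<Union>C" using that(2) unfolding pred_on.chain_def by auto
    ultimately show ?thesis by simp
  qed
  then obtain M where "M \<in> ?S" "\<forall>X\<in>?S. M \<subseteq> X \<longrightarrow> X = M"
    using subset_Zorn_nonempty[OF ne] by meson
  then show ?thesis unfolding emax_def by blast
qed

lemma star_mem: "ideal M R \<Longrightarrow> x \<in> M \<Longrightarrow> ic_star A x \<in> M"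
proof -
  assume M: "ideal M R" and x: "x \<in> M"
  interpret M: ideal M R by (rule M)
  have xc: "x \<in> carrier R" using x M.a_Hcarr by simp
  have "ic_star A x \<otimes>\<^bsub>R\<^esub> x \<otimes>\<^bsub>R\<^esub> ic_star A x \<in> M"
    using x xc star_closed[OF xc] M.I_l_closed M.I_r_closed by simp
  then show ?thesis using star2[OF xc] by simp
qed

lemma idem_star: "x \<in> carrier R \<Longrightarrow> (x \<otimes>\<^bsub>R\<^esub> ic_star A x) \<otimes>\<^bsub>R\<^esub> (x \<otimes>\<^bsub>R\<^esub> ic_star A x) = x \<otimes>\<^bsub>R\<^esub> ic_star A x"
  using star1[of x] star_closed[of x] by (simp add: R.m_assoc[symmetric])

lemma emax_key:
  assumes em: "emax e M" and ec: "e \<in> carrier R" and ee: "e \<otimes>\<^bsub>R\<^esub> e = e"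
    and x: "x \<in> carrier R" "x \<notin> M"
  shows "\<one>\<^bsub>R\<^esub> \<ominus>\<^bsub>R\<^esub> x \<otimes>\<^bsub>R\<^esub> ic_star A x \<in> M"
proof (rule ccontr)
  assume g: "\<one>\<^bsub>R\<^esub> \<ominus>\<^bsub>R\<^esub> x \<otimes>\<^bsub>R\<^esub> ic_star A x \<notin> M"
  have M: "ideal M R" and eM: "e \<notin> M" and mx: "\<And>J. ideal J R \<Longrightarrow> e \<notin> J \<Longrightarrow> M \<subseteq> J \<Longrightarrow> J = M"
    using em unfolding emax_def by auto
  interpret M: ideal M R by (rule M)
  define f where "f = x \<otimes>\<^bsub>R\<^esub> ic_star A x"
  have fc: "f \<in> carrier R" using x star_closed f_def by simp
  have ff: "f \<otimes>\<^bsub>R\<^esub> f = f" using idem_star[OF x(1)] f_def by simp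
  have xf: "x = f \<otimes>\<^bsub>R\<^esub> x" using star1[OF x(1)] f_def by simp
  define K where "K = {y \<in> carrier R. y \<otimes>\<^bsub>R\<^esub> f \<in> M}"
  have K: "ideal K R" using colon_ideal[OF M fc] K_def by simp
  have MK: "M \<subseteq> K" using K_def M.I_r_closed fc M.a_Hcarr by auto
  have "(\<one>\<^bsub>R\<^esub> \<ominus>\<^bsub>R\<^esub> f) \<otimes>\<^bsub>R\<^esub> f = \<zero>\<^bsub>R\<^esub>"
    using fc ff by (simp add: R.l_minus R.minus_eq R.l_distr R.r_neg)
  then have "\<one>\<^bsub>R\<^esub> \<ominus>\<^bsub>R\<^esub> f \<in> K" using K_def fc M.additive_subgroup_axioms additive_subgroup.zero_closed by fastforce
  then have "K \<noteq> M" using g f_def by auto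
  then have "e \<in> K" using mx[OF K _ MK] by auto
  then have ef: "e \<otimes>\<^bsub>R\<^esub> f \<in> M" using K_def by simp
  define K' where "K' = {y \<in> carrier R. y \<otimes>\<^bsub>R\<^esub> e \<in> M}"
  have K': "ideal K' R" using colon_ideal[OF M ec] K'_def by simp
  have MK': "M \<subseteq> K'" using K'_def M.I_r_closed ec M.a_Hcarr by auto
  have "f \<in> K'" using K'_def ef fc ec R.m_comm by simp
  moreover have "e \<notin> K'" using K'_def ee eM by simp
  ultimately have "f \<in> M" using mx[OF K' _ MK'] by auto
  then have "f \<otimes>\<^bsub>R\<^esub> x \<in> M" using x M.I_r_closed by simp
  then show False using xf x by simp
qed

end

definition rep :: "'a set \<Rightarrow> 'a" where "rep C = (SOME x. x \<in> C)"

definition qT :: "'a icalg \<Rightarrow> 'a set \<Rightarrow> 'a ring" where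
  "qT A M = \<lparr>carrier = rep ` carrier (to_ring A Quot M),
      monoid.mult = \<lambda>u v. rep (M +>\<^bsub>to_ring A\<^esub> (u \<otimes>\<^bsub>to_ring A\<^esub> v)),
      monoid.one = rep (M +>\<^bsub>to_ring A\<^esub> \<one>\<^bsub>to_ring A\<^esub>),
      ring.zero = rep (M +>\<^bsub>to_ring A\<^esub> \<zero>\<^bsub>to_ring A\<^esub>),
      ring.add = \<lambda>u v. rep (M +>\<^bsub>to_ring A\<^esub> (u \<oplus>\<^bsub>to_ring A\<^esub> v))\<rparr>"

definition qphi :: "'a icalg \<Rightarrow> 'a set \<Rightarrow> 'a \<Rightarrow> 'a" where
  "qphi A M x = rep (M +>\<^bsub>to_ring A\<^esub> x)"

locale icm_max = icm +
  fixes M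
  assumes M_ideal: "ideal M R" and one_notin: "\<one>\<^bsub>R\<^esub> \<notin> M"
    and key: "\<And>x. x \<in> carrier R \<Longrightarrow> x \<notin> M \<Longrightarrow> \<one>\<^bsub>R\<^esub> \<ominus>\<^bsub>R\<^esub> x \<otimes>\<^bsub>R\<^esub> ic_star A x \<in> M"
begin

sublocale MI: ideal M R by (rule M_ideal)

abbreviation "Q \<equiv> R Quot M"
abbreviation "T \<equiv> qT A M"
abbreviation "\<pi> \<equiv> (\<lambda>x. M +>\<^bsub>R\<^esub> x)"

lemma maxi: "maximalideal M R"
proof (rule maximalidealI[OF M_ideal])
  show "carrier R \<noteq> M" using one_notin by auto
  fix J assume J: "ideal J R" "M \<subseteq> J" "J \<subseteq> carrier R"
  show "J = M \<or> J = carrier R"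
  proof (cases "J = M")
    case False
    then obtain x where x: "x \<in> J" "x \<notin> M" using J by auto
    have xc: "x \<in> carrier R" using x J by auto
    have "x \<otimes>\<^bsub>R\<^esub> ic_star A x \<in> J" using x xc star_closed ideal.I_r_closed[OF J(1)] by auto
    moreover have "\<one>\<^bsub>R\<^esub> \<ominus>\<^bsub>R\<^esub> x \<otimes>\<^bsub>R\<^esub> ic_star A x \<in> J" using key[OF xc x(2)] J by auto
    ultimately have "\<one>\<^bsub>R\<^esub> \<in> J"
      using additive_subgroup.a_closed[OF ideal.axioms(1)[OF J(1)]] xc star_closed
      by (metis R.add.inv_solve_right' R.m_closed R.minus_eq R.one_closed R.r_neg2 ideal.Icarr J(1))
    then show ?thesis using ideal.one_imp_carrier[OF J(1)] by simp
  qed simp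
qed

lemma Qfield: "field Q" using maximalideal.quotient_is_field[OF maxi cr] .

lemma pi_hom: "\<pi> \<in> ring_hom R Q" using MI.rcos_ring_hom by simp

lemma carrQ: "carrier Q = \<pi> ` carrier R"
  by (auto simp: FactRing_def A_RCOSETS_def')

lemma pi_self: "x \<in> carrier R \<Longrightarrow> x \<in> \<pi> x" using MI.a_rcos_self by simp

lemma rep_in: "x \<in> carrier R \<Longrightarrow> rep (\<pi> x) \<in> \<pi> x"
  unfolding rep_def using pi_self by (metis someI_ex)

lemma rep_carr: "x \<in> carrier R \<Longrightarrow> rep (\<pi> x) \<in> carrier R"
  using rep_in MI.a_elemrcos_carrier by blast

lemma pi_rep: "x \<in> carrier R \<Longrightarrow> \<pi> (rep (\<pi> x)) = \<pi> x"
  using rep_in MI.a_repr_independence' by metis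

lemma pi_eq: "x \<in> carrier R \<Longrightarrow> y \<in> carrier R \<Longrightarrow> \<pi> x = \<pi> y \<longleftrightarrow> x \<ominus>\<^bsub>R\<^esub> y \<in> M"
  by (metis MI.a_rcos_module_minus MI.a_repr_independence' MI.a_repr_independenceD R.ring_axioms)

lemma pi_zero: "x \<in> carrier R \<Longrightarrow> \<pi> x = M \<longleftrightarrow> x \<in> M"
  using pi_eq[of x "\<zero>\<^bsub>R\<^esub>"] MI.a_rcos_const[of "\<zero>\<^bsub>R\<^esub>"] by (simp add: R.minus_eq)

lemma rep_inj: "inj_on rep (carrier Q)"
proof (rule inj_onI)
  fix C D assume "C \<in> carrier Q" "D \<in> carrier Q" "rep C = rep D"
  then obtain x y where "x \<in> carrier R" "C = \<pi> x" "y \<in> carrier R" "D = \<pi> y" "rep C = rep D"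
    using carrQ by auto
  then show "C = D" using pi_rep by metis
qed

lemma rep_iso: "rep \<in> ring_iso Q T"
proof (rule ring_iso_memI)
  fix C D assume C: "C \<in> carrier Q" and D: "D \<in> carrier Q"
  obtain x y where x: "x \<in> carrier R" "C = \<pi> x" and y: "y \<in> carrier R" "D = \<pi> y"
    using C D carrQ by auto
  show "rep C \<in> carrier T" using C by (simp add: qT_def)
  have "rep (C \<otimes>\<^bsub>Q\<^esub> D) = rep (\<pi> (x \<otimes>\<^bsub>R\<^esub> y))"
    using x y ring_hom_mult[OF pi_hom] by simp
  also have "\<dots> = rep (\<pi> (rep C \<otimes>\<^bsub>R\<^esub> rep D))"
    using x y ring_hom_mult[OF pi_hom] pi_rep rep_carr by simp
  finally show "rep (C \<otimes>\<^bsub>Q\<^esub> D) = rep C \<otimes>\<^bsub>T\<^esub> rep D" by (simp add: qT_def)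
  have "rep (C \<oplus>\<^bsub>Q\<^esub> D) = rep (\<pi> (x \<oplus>\<^bsub>R\<^esub> y))"
    using x y ring_hom_add[OF pi_hom] by simp
  also have "\<dots> = rep (\<pi> (rep C \<oplus>\<^bsub>R\<^esub> rep D))"
    using x y ring_hom_add[OF pi_hom] pi_rep rep_carr by simp
  finally show "rep (C \<oplus>\<^bsub>Q\<^esub> D) = rep C \<oplus>\<^bsub>T\<^esub> rep D" by (simp add: qT_def)
next
  show "rep \<one>\<^bsub>Q\<^esub> = \<one>\<^bsub>T\<^esub>" by (simp add: qT_def FactRing_def)
  show "bij_betw rep (carrier Q) (carrier T)" using rep_inj by (simp add: qT_def bij_betw_def)
qed

lemma T_field: "field T"
proof -
  have "field (T\<lparr>zero := rep \<zero>\<^bsub>Q\<^esub>\<rparr>)" using field.ring_iso_imp_img_field[OF Qfield rep_iso] .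
  moreover have "rep \<zero>\<^bsub>Q\<^esub> = \<zero>\<^bsub>T\<^esub>" using MI.a_rcos_const[of "\<zero>\<^bsub>R\<^esub>"] by (simp add: qT_def FactRing_def)
  ultimately show ?thesis by simp
qed

sublocale TF: field T by (rule T_field)

lemma phi_hom: "qphi A M \<in> ring_hom R T"
proof -
  have "rep \<circ> \<pi> \<in> ring_hom R T" using ring_hom_trans[OF pi_hom] rep_iso by (auto simp: ring_iso_def)
  moreover have "rep \<circ> \<pi> = qphi A M" by (auto simp: qphi_def)
  ultimately show ?thesis by simp
qed

sublocale PH: ring_hom_ring R T "qphi A M"
  using phi_hom R.ring_axioms TF.ring_axioms by (intro ring_hom_ringI2) auto

lemma phi_eq: "x \<in> carrier R \<Longrightarrow> y \<in> carrier R \<Longrightarrow> qphi A M x = qphi A M y \<longleftrightarrow> x \<ominus>\<^bsub>R\<^esub> y \<in> M"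
proof -
  assume xy: "x \<in> carrier R" "y \<in> carrier R"
  have "qphi A M x = qphi A M y \<longleftrightarrow> \<pi> x = \<pi> y"
    using rep_inj xy carrQ unfolding qphi_def inj_on_def by auto
  then show ?thesis using pi_eq xy by simp
qed

lemma phi_zero_iff: "x \<in> carrier R \<Longrightarrow> qphi A M x = \<zero>\<^bsub>T\<^esub> \<longleftrightarrow> x \<in> M"
  using phi_eq[of x "\<zero>\<^bsub>R\<^esub>"] PH.hom_zero by (simp add: R.minus_eq)

end

definition qG :: "'a icalg \<Rightarrow> 'a set \<Rightarrow> 'a icalg" where
  "qG A M = (let T = qT A M in
     \<lparr>ic_carrier = carrier T, ic_zero = \<zero>\<^bsub>T\<^esub>, ic_one = \<one>\<^bsub>T\<^esub>, ic_add = (\<oplus>\<^bsub>T\<^esub>),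
      ic_neg = a_inv T, ic_mul = (\<otimes>\<^bsub>T\<^esub>),
      ic_star = (\<lambda>u. if u = \<zero>\<^bsub>T\<^esub> then \<zero>\<^bsub>T\<^esub> else inv\<^bsub>T\<^esub> u),
      ic_root = (\<lambda>p u. if rchar T = p then (THE r. r \<in> carrier T \<and> r [^]\<^bsub>T\<^esub> p = u) else \<zero>\<^bsub>T\<^esub>)\<rparr>)"

lemma to_ring_qG: "to_ring (qG A M) = qT A M"
  by (simp add: Let_def qG_def to_ring_def qT_def Let_def)

context icm_max begin

lemma phi_addpow: "qphi A M ([(n::nat)] \<cdot>\<^bsub>R\<^esub> \<one>\<^bsub>R\<^esub>) = [n] \<cdot>\<^bsub>T\<^esub> \<one>\<^bsub>T\<^esub>"
  by (induction n) (simp_all add: R.add.nat_pow_Suc TF.add.nat_pow_Suc)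

lemma phi_pow: "x \<in> carrier R \<Longrightarrow> qphi A M (x [^]\<^bsub>R\<^esub> (n::nat)) = qphi A M x [^]\<^bsub>T\<^esub> n"
  by (induction n) simp_all

lemma prime_M: assumes "x \<in> carrier R" "y \<in> carrier R" "x \<otimes>\<^bsub>R\<^esub> y \<in> M" "x \<notin> M" shows "y \<in> M"
proof -
  have s: "ic_star A x \<in> carrier R" using star_closed assms by simp
  have "y \<otimes>\<^bsub>R\<^esub> (\<one>\<^bsub>R\<^esub> \<ominus>\<^bsub>R\<^esub> x \<otimes>\<^bsub>R\<^esub> ic_star A x) \<in> M"
    using key[OF assms(1,4)] assms s MI.I_l_closed by simp
  moreover have "(x \<otimes>\<^bsub>R\<^esub> y) \<otimes>\<^bsub>R\<^esub> ic_star A x \<in> M" using assms s MI.I_r_closed by simp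
  ultimately have "y \<otimes>\<^bsub>R\<^esub> (\<one>\<^bsub>R\<^esub> \<ominus>\<^bsub>R\<^esub> x \<otimes>\<^bsub>R\<^esub> ic_star A x) \<oplus>\<^bsub>R\<^esub> (x \<otimes>\<^bsub>R\<^esub> y) \<otimes>\<^bsub>R\<^esub> ic_star A x \<in> M"
    using MI.a_closed by simp
  moreover have "y \<otimes>\<^bsub>R\<^esub> (\<one>\<^bsub>R\<^esub> \<ominus>\<^bsub>R\<^esub> x \<otimes>\<^bsub>R\<^esub> ic_star A x) \<oplus>\<^bsub>R\<^esub> (x \<otimes>\<^bsub>R\<^esub> y) \<otimes>\<^bsub>R\<^esub> ic_star A x = y"
    using assms s by algebra
  ultimately show ?thesis by simp
qed

lemma root_char:
  assumes p: "Factorial_Ring.prime p" and c: "rchar T = p" and x: "x \<in> carrier R"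
  shows "qphi A M (ic_root A p x) [^]\<^bsub>T\<^esub> p = qphi A M x"
proof -
  have z: "qphi A M (chp p) = \<zero>\<^bsub>T\<^esub>" using phi_addpow TF.rchar_eq_zero[OF p c] by (simp add: chp_def)
  have "qphi A M (ic_root A p x) [^]\<^bsub>T\<^esub> p = qphi A M (ic_root A p x [^]\<^bsub>R\<^esub> p)"
    using phi_pow root_closed p x by simp
  also have "\<dots> = qphi A M (x \<otimes>\<^bsub>R\<^esub> (\<one>\<^bsub>R\<^esub> \<ominus>\<^bsub>R\<^esub> chp p \<otimes>\<^bsub>R\<^esub> ic_star A (chp p)))"
    using root1[OF p x] by simp
  also have "\<dots> = qphi A M x"
    using z x star_closed chp_closed by (simp add: R.minus_eq TF.minus_eq PH.hom_a_inv)
  finally show ?thesis .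
qed

lemma root_nochar:
  assumes p: "Factorial_Ring.prime p" and c: "rchar T \<noteq> p" and x: "x \<in> carrier R"
  shows "ic_root A p x \<in> M"
proof -
  have "[p] \<cdot>\<^bsub>T\<^esub> \<one>\<^bsub>T\<^esub> \<noteq> \<zero>\<^bsub>T\<^esub>" using TF.rchar_ne_prime[OF p c] by simp
  then have "chp p \<notin> M" using phi_addpow phi_zero_iff[of "chp p"] chp_closed by (simp add: chp_def)
  moreover have "chp p \<otimes>\<^bsub>R\<^esub> ic_root A p x \<in> M"
    using root2[OF p x] root_closed[OF p x] chp_closed R.m_comm MI.additive_subgroup_axioms
      additive_subgroup.zero_closed by fastforce
  ultimately show ?thesis using prime_M chp_closed root_closed[OF p x] by blast
qed

lemma carrT: "carrier T = qphi A M ` carrier R"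
  using carrQ by (auto simp: qT_def qphi_def)

lemma ICF_qG: "ICF (qG A M)"
  unfolding ICF_def Let_def to_ring_qG
proof (intro conjI ballI allI impI)
  show "weakly_rooted T"
    unfolding weakly_rooted_def
  proof (intro conjI)
    show "field T" by (rule T_field)
    show "rchar T = 0 \<or> Factorial_Ring.prime (rchar T) \<and> (\<forall>a\<in>carrier T. \<exists>r\<in>carrier T. r [^]\<^bsub>T\<^esub> rchar T = a)"
    proof (cases "rchar T = 0")
      case False
      then have p: "Factorial_Ring.prime (rchar T)" using TF.rchar_prime by simp
      have "\<exists>r\<in>carrier T. r [^]\<^bsub>T\<^esub> rchar T = a" if a: "a \<in> carrier T" for a
      proof -
        obtain x where x: "x \<in> carrier R" "a = qphi A M x" using a carrT by auto
        show ?thesis using root_char[OF p refl x(1)] x root_closed[OF p x(1)] by (intro bexI[of _ "qphi A M (ic_root A (rchar T) x)"]) auto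
      qed
      then show ?thesis using p by simp
    qed simp
  qed
qed (simp_all add: Let_def qG_def Let_def)

lemma hom_qG: "ic_hom (qphi A M) A (qG A M)"
  unfolding ic_hom_def
proof (intro conjI ballI allI impI)
  fix x assume x: "x \<in> ic_carrier A"
  then have xc: "x \<in> carrier R" by (simp add: tr)
  show "qphi A M x \<in> ic_carrier (qG A M)" using xc by (simp add: Let_def qG_def)
  show "qphi A M (ic_neg A x) = ic_neg (qG A M) (qphi A M x)"
    using xc by (simp add: Let_def qG_def neg_eq PH.hom_a_inv)
  show "qphi A M (ic_star A x) = ic_star (qG A M) (qphi A M x)"
  proof (cases "x \<in> M")
    case True
    then show ?thesis using star_mem[OF M_ideal True] phi_zero_iff xc star_closed by (simp add: Let_def qG_def)
  next
    case False
    then have nz: "qphi A M x \<noteq> \<zero>\<^bsub>T\<^esub>" using phi_zero_iff xc by simp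
    have "qphi A M (x \<otimes>\<^bsub>R\<^esub> ic_star A x) = qphi A M \<one>\<^bsub>R\<^esub>"
      using phi_eq[of "\<one>\<^bsub>R\<^esub>" "x \<otimes>\<^bsub>R\<^esub> ic_star A x"] key[OF xc False] xc star_closed by simp
    then have "qphi A M x \<otimes>\<^bsub>T\<^esub> qphi A M (ic_star A x) = \<one>\<^bsub>T\<^esub>" using xc star_closed by simp
    then have "inv\<^bsub>T\<^esub> (qphi A M x) = qphi A M (ic_star A x)"
      using TF.comm_inv_char xc star_closed by simp
    then show ?thesis using nz by (simp add: Let_def qG_def)
  qed
  fix p :: nat assume p: "Factorial_Ring.prime p"
  show "qphi A M (ic_root A p x) = ic_root (qG A M) p (qphi A M x)"
  proof (cases "rchar T = p")
    case True
    have z: "[p] \<cdot>\<^bsub>T\<^esub> \<one>\<^bsub>T\<^esub> = \<zero>\<^bsub>T\<^esub>" using TF.rchar_eq_zero[OF p True] .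
    have u: "\<And>r. r \<in> carrier T \<and> r [^]\<^bsub>T\<^esub> p = qphi A M x \<Longrightarrow> r = qphi A M (ic_root A p x)"
      using TF.frob_inj[OF _ _ p z] root_char[OF p True xc] root_closed[OF p xc] by auto
    have "(THE r. r \<in> carrier T \<and> r [^]\<^bsub>T\<^esub> p = qphi A M x) = qphi A M (ic_root A p x)"
      using root_char[OF p True xc] root_closed[OF p xc] u by (intro the_equality) auto
    then show ?thesis using True by (simp add: Let_def qG_def)
  next
    case False
    then show ?thesis using root_nochar[OF p False xc] phi_zero_iff root_closed[OF p xc]
      by (simp add: Let_def qG_def)
  qed
next
  fix x y assume "x \<in> ic_carrier A" "y \<in> ic_carrier A"
  then have xc: "x \<in> carrier R" "y \<in> carrier R" by (simp_all add: tr)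
  show "qphi A M (ic_add A x y) = ic_add (qG A M) (qphi A M x) (qphi A M y)"
    using xc by (simp add: Let_def qG_def tr)
  show "qphi A M (ic_mul A x y) = ic_mul (qG A M) (qphi A M x) (qphi A M y)"
    using xc by (simp add: Let_def qG_def tr)
next
  have "ic_zero A = \<zero>\<^bsub>R\<^esub>" "ic_one A = \<one>\<^bsub>R\<^esub>" by (simp_all add: to_ring_def)
  then show "qphi A M (ic_zero A) = ic_zero (qG A M)" "qphi A M (ic_one A) = ic_one (qG A M)"
    by (simp_all add: Let_def qG_def)
qed

end

context icm begin

lemma emax_icm_max:
  assumes "emax e M" "e \<in> carrier R" "e \<otimes>\<^bsub>R\<^esub> e = e"
  shows "icm_max A M"
proof (intro icm_max.intro icm_max_axioms.intro)
  show "icm A" by (rule icm_axioms)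
  show "ideal M R" using assms(1) by (simp add: emax_def)
  show "\<one>\<^bsub>R\<^esub> \<notin> M"
  proof
    assume "\<one>\<^bsub>R\<^esub> \<in> M"
    then have "\<one>\<^bsub>R\<^esub> \<otimes>\<^bsub>R\<^esub> e \<in> M" using ideal.I_r_closed[of M R "\<one>\<^bsub>R\<^esub>" e] assms by (simp add: emax_def)
    then have "e \<in> M" using assms(2) by simp
    then show False using assms by (simp add: emax_def)
  qed
  show "\<And>x. x \<in> carrier R \<Longrightarrow> x \<notin> M \<Longrightarrow> \<one>\<^bsub>R\<^esub> \<ominus>\<^bsub>R\<^esub> x \<otimes>\<^bsub>R\<^esub> ic_star A x \<in> M"
    using emax_key[OF assms] by simp
qed

end

lemma hom_into_prod:
  assumes "\<And>j. j \<in> J \<Longrightarrow> ic_hom (f j) A (G j)"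
  shows "ic_hom (\<lambda>x. \<lambda>j\<in>J. f j x) A (ic_prod J G)"
  using assms unfolding ic_hom_def ic_prod_def by (auto intro!: ext)

lemma upd_simps: "ic_carrier (X\<lparr>ic_carrier := S\<rparr>) = S" "ic_zero (X\<lparr>ic_carrier := S\<rparr>) = ic_zero X"
  "ic_one (X\<lparr>ic_carrier := S\<rparr>) = ic_one X" "ic_add (X\<lparr>ic_carrier := S\<rparr>) = ic_add X"
  "ic_mul (X\<lparr>ic_carrier := S\<rparr>) = ic_mul X" "ic_neg (X\<lparr>ic_carrier := S\<rparr>) = ic_neg X"
  "ic_star (X\<lparr>ic_carrier := S\<rparr>) = ic_star X" "ic_root (X\<lparr>ic_carrier := S\<rparr>) = ic_root X"
  by simp_all

lemma part1:
  assumes "ISP_via K I F A" shows "HSP_via K I F A"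
proof -
  from assms obtain h where alg: "ic_alg A" and K: "\<forall>i\<in>I. K (F i)"
    and h: "ic_hom h A (ic_prod I F)" and inj: "inj_on h (ic_carrier A)"
    unfolding ISP_via_def by blast
  let ?P = "ic_prod I F"
  let ?S = "h ` ic_carrier A"
  let ?g = "inv_into (ic_carrier A) h"
  have cl: "ic_closed A (ic_carrier A)" using alg by (simp add: ic_alg_def)
  have S: "?S \<subseteq> ic_carrier ?P" using h by (auto simp: ic_hom_def)
  have gh: "?g (h x) = x" if "x \<in> ic_carrier A" for x using inv_into_f_f[OF inj that] .
  have hz: "h (ic_zero A) = ic_zero ?P" and ho: "h (ic_one A) = ic_one ?P"
    and ha: "\<And>x y. x \<in> ic_carrier A \<Longrightarrow> y \<in> ic_carrier A \<Longrightarrow> h (ic_add A x y) = ic_add ?P (h x) (h y)"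
    and hm: "\<And>x y. x \<in> ic_carrier A \<Longrightarrow> y \<in> ic_carrier A \<Longrightarrow> h (ic_mul A x y) = ic_mul ?P (h x) (h y)"
    and hn: "\<And>x. x \<in> ic_carrier A \<Longrightarrow> h (ic_neg A x) = ic_neg ?P (h x)"
    and hs: "\<And>x. x \<in> ic_carrier A \<Longrightarrow> h (ic_star A x) = ic_star ?P (h x)"
    and hr: "\<And>p x. Factorial_Ring.prime p \<Longrightarrow> x \<in> ic_carrier A \<Longrightarrow> h (ic_root A p x) = ic_root ?P p (h x)"
    using h unfolding ic_hom_def by auto
  have cz: "ic_zero A \<in> ic_carrier A" and co: "ic_one A \<in> ic_carrier A"
    and ca: "\<And>x y. x \<in> ic_carrier A \<Longrightarrow> y \<in> ic_carrier A \<Longrightarrow> ic_add A x y \<in> ic_carrier A"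
    and cm: "\<And>x y. x \<in> ic_carrier A \<Longrightarrow> y \<in> ic_carrier A \<Longrightarrow> ic_mul A x y \<in> ic_carrier A"
    and cn: "\<And>x. x \<in> ic_carrier A \<Longrightarrow> ic_neg A x \<in> ic_carrier A"
    and cs: "\<And>x. x \<in> ic_carrier A \<Longrightarrow> ic_star A x \<in> ic_carrier A"
    and cr: "\<And>p x. Factorial_Ring.prime p \<Longrightarrow> x \<in> ic_carrier A \<Longrightarrow> ic_root A p x \<in> ic_carrier A"
    using cl unfolding ic_closed_def by auto
  have Scl: "ic_closed ?P ?S"
    unfolding ic_closed_def
  proof (intro conjI ballI allI impI)
    show "ic_zero ?P \<in> ?S" using hz cz by (metis image_eqI)
    show "ic_one ?P \<in> ?S" using ho co by (metis image_eqI)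
  next
    fix u v assume "u \<in> ?S" "v \<in> ?S"
    then obtain x y where xy: "x \<in> ic_carrier A" "y \<in> ic_carrier A" "u = h x" "v = h y" by auto
    show "ic_add ?P u v \<in> ?S" using ha[OF xy(1,2)] ca[OF xy(1,2)] xy by (metis image_eqI)
    show "ic_mul ?P u v \<in> ?S" using hm[OF xy(1,2)] cm[OF xy(1,2)] xy by (metis image_eqI)
  next
    fix u assume "u \<in> ?S"
    then obtain x where x: "x \<in> ic_carrier A" "u = h x" by auto
    show "ic_neg ?P u \<in> ?S" using hn[OF x(1)] cn[OF x(1)] x by (metis image_eqI)
    show "ic_star ?P u \<in> ?S" using hs[OF x(1)] cs[OF x(1)] x by (metis image_eqI)
  next
    fix p :: nat and u assume p: "Factorial_Ring.prime p" and "u \<in> ?S"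
    then obtain x where x: "x \<in> ic_carrier A" "u = h x" by auto
    show "ic_root ?P p u \<in> ?S" using hr[OF p x(1)] cr[OF p x(1)] x by (metis image_eqI)
  qed
  have gS: "?g ` ?S = ic_carrier A" using inj by simp
  have ghom: "ic_hom ?g (?P\<lparr>ic_carrier := ?S\<rparr>) A"
  proof (unfold ic_hom_def, simp only: upd_simps, intro conjI ballI allI impI)
    fix u assume "u \<in> ?S" then show "?g u \<in> ic_carrier A" by (simp add: inv_into_into)
  next
    show "?g (ic_zero ?P) = ic_zero A" using hz cz gh by metis
  next
    show "?g (ic_one ?P) = ic_one A" using ho co gh by metis
  next
    fix u v assume "u \<in> ?S" "v \<in> ?S"
    then obtain x y where xy: "x \<in> ic_carrier A" "y \<in> ic_carrier A" "u = h x" "v = h y" by auto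
    show "?g (ic_add ?P u v) = ic_add A (?g u) (?g v)"
      using ha[OF xy(1,2)] ca[OF xy(1,2)] gh xy by metis
    show "?g (ic_mul ?P u v) = ic_mul A (?g u) (?g v)"
      using hm[OF xy(1,2)] cm[OF xy(1,2)] gh xy by metis
  next
    fix u assume "u \<in> ?S"
    then obtain x where x: "x \<in> ic_carrier A" "u = h x" by auto
    show "?g (ic_neg ?P u) = ic_neg A (?g u)"
      using hn[OF x(1)] cn[OF x(1)] gh x by metis
    show "?g (ic_star ?P u) = ic_star A (?g u)"
      using hs[OF x(1)] cs[OF x(1)] gh x by metis
  next
    fix p :: nat and u assume p: "Factorial_Ring.prime p" and "u \<in> ?S"
    then obtain x where x: "x \<in> ic_carrier A" "u = h x" by auto
    show "?g (ic_root ?P p u) = ic_root A p (?g u)"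
      using hr[OF p x(1)] cr[OF p x(1)] gh x by metis
  qed
  show ?thesis unfolding HSP_via_def using alg K S Scl ghom gS by blast
qed


lemma (in ring) minus_eq0_iff: "a \<in> carrier R \<Longrightarrow> b \<in> carrier R \<Longrightarrow> a \<ominus> b = \<zero> \<longleftrightarrow> a = b"
proof
  assume ab: "a \<in> carrier R" "b \<in> carrier R" and z: "a \<ominus> b = \<zero>"
  have "a \<ominus> b \<oplus> b = a" using ab by (simp add: minus_eq a_assoc l_neg)
  then show "a = b" using z ab by simp
qed (simp add: r_neg l_neg minus_eq)

lemma part3: "is_discriminator_term ICF disc_t"
  unfolding is_discriminator_term_def
proof (intro allI impI ballI)
  fix B :: "'k icalg" and a b c
  assume B: "ICF B" and abc: "a \<in> ic_carrier B" "b \<in> ic_carrier B" "c \<in> ic_carrier B"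
  interpret field "to_ring B" using ICF_field[OF B] .
  have abc': "a \<in> carrier (to_ring B)" "b \<in> carrier (to_ring B)" "c \<in> carrier (to_ring B)"
    using abc by (simp_all add: tr)
  have d: "ic_add B a (ic_neg B b) = a \<ominus>\<^bsub>to_ring B\<^esub> b"
    using abc' ICF_neg[OF B] by (simp add: tr minus_eq)
  show "disc_t B a b c = (if a = b then c else a)"
  proof (cases "a = b")
    case True
    then have "a \<ominus>\<^bsub>to_ring B\<^esub> b = \<zero>\<^bsub>to_ring B\<^esub>" using abc' by (simp add: minus_eq0_iff)
    then show ?thesis using True d abc' ICF_star[OF B] ICF_neg[OF B]
      by (simp add: disc_t_def Let_def tr)
  next
    case False
    then have nz: "a \<ominus>\<^bsub>to_ring B\<^esub> b \<noteq> \<zero>\<^bsub>to_ring B\<^esub>" using abc' by (simp add: minus_eq0_iff)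
    have mc: "a \<ominus>\<^bsub>to_ring B\<^esub> b \<in> carrier (to_ring B)" using abc' by simp
    have u: "a \<ominus>\<^bsub>to_ring B\<^esub> b \<in> Units (to_ring B)" using nz mc field_Units by simp
    have "(a \<ominus>\<^bsub>to_ring B\<^esub> b) \<otimes>\<^bsub>to_ring B\<^esub> inv\<^bsub>to_ring B\<^esub> (a \<ominus>\<^bsub>to_ring B\<^esub> b) = \<one>\<^bsub>to_ring B\<^esub>"
      using u by simp
    then show ?thesis using False d abc' ICF_star[OF B] ICF_neg[OF B] nz u
      by (simp add: disc_t_def Let_def tr r_neg)
  qed
qed

lemma part2:
  fixes A :: "'a icalg"
  assumes H: "HSP_via (ICF :: 'k icalg \<Rightarrow> bool) I F A"
  shows "\<exists>(J :: ('a \<times> 'a) set) (G :: 'a \<times> 'a \<Rightarrow> 'a icalg). ISP_via ICF J G A"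
proof -
  interpret icm A using HSP_icm[OF H] .
  define J where "J = {(a, b). a \<in> carrier (to_ring A) \<and> b \<in> carrier (to_ring A) \<and> a \<noteq> b}"
  define d where "d j = fst j \<ominus>\<^bsub>to_ring A\<^esub> snd j" for j :: "'a \<times> 'a"
  define e where "e j = d j \<otimes>\<^bsub>to_ring A\<^esub> ic_star A (d j)" for j
  define M where "M j = (SOME M. emax (e j) M)" for j
  define G where "G j = qG A (M j)" for j
  have jf: "icm_max A (M j) \<and> d j \<notin> M j" if j: "j \<in> J" for j
  proof -
    obtain a b where ab: "j = (a, b)" "a \<in> carrier (to_ring A)" "b \<in> carrier (to_ring A)" "a \<noteq> b" using j J_def by auto
    have dc: "d j \<in> carrier (to_ring A)" using ab d_def by simp
    have ec: "e j \<in> carrier (to_ring A)" using dc star_closed e_def by simp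
    have ee: "e j \<otimes>\<^bsub>to_ring A\<^esub> e j = e j" using idem_star[OF dc] e_def by simp
    have ed: "e j \<otimes>\<^bsub>to_ring A\<^esub> d j = d j" using star1[OF dc] e_def by simp
    have "d j \<noteq> \<zero>\<^bsub>to_ring A\<^esub>" using ab d_def R.minus_eq0_iff by simp
    then have enz: "e j \<noteq> \<zero>\<^bsub>to_ring A\<^esub>" using ed dc by auto
    have em: "emax (e j) (M j)" using emax_exists[OF enz] M_def by (metis someI_ex)
    have im: "icm_max A (M j)" using emax_icm_max[OF em ec ee] .
    have "d j \<notin> M j"
    proof
      assume "d j \<in> M j"
      then have "e j \<in> M j" using ideal.I_r_closed[of "M j" "to_ring A" "d j" "ic_star A (d j)"] em dc star_closed
        e_def by (simp add: emax_def)
      then show False using em by (simp add: emax_def)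
    qed
    then show ?thesis using im by simp
  qed
  have "ISP_via ICF J G A"
    unfolding ISP_via_def
  proof (intro conjI ballI exI)
    show "ic_alg A" by (rule alg)
    fix j assume "j \<in> J" then show "ICF (G j)" using jf icm_max.ICF_qG[of A "M j"] G_def by simp
  next
    show "ic_hom (\<lambda>x. \<lambda>j\<in>J. qphi A (M j) x) A (ic_prod J G)"
    proof (rule hom_into_prod)
      fix j assume "j \<in> J"
      then show "ic_hom (qphi A (M j)) A (G j)" using icm_max.hom_qG[of A "M j"] jf G_def by simp
    qed
    show "inj_on (\<lambda>x. \<lambda>j\<in>J. qphi A (M j) x) (ic_carrier A)"
    proof (rule inj_onI, rule ccontr)
      fix x y assume xy: "x \<in> ic_carrier A" "y \<in> ic_carrier A"
        and eq: "(\<lambda>j\<in>J. qphi A (M j) x) = (\<lambda>j\<in>J. qphi A (M j) y)" and ne: "x \<noteq> y"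
      have xy': "x \<in> carrier (to_ring A)" "y \<in> carrier (to_ring A)" using xy by (simp_all add: tr)
      have j: "(x, y) \<in> J" using xy' ne J_def by simp
      then have "qphi A (M (x, y)) x = qphi A (M (x, y)) y" using eq by (metis restrict_apply')
      then have "x \<ominus>\<^bsub>to_ring A\<^esub> y \<in> M (x, y)" using icm_max.phi_eq[of A "M (x, y)" x y] jf[OF j] xy' by simp
      then show False using jf[OF j] d_def by simp
    qed
  qed
  then show ?thesis by blast
qed

theorem mainTheorem7:
  fixes A :: "'a icalg"
  shows "(\<forall>(I :: 'i set) (F :: 'i \<Rightarrow> 'k icalg). ISP_via ICF I F A \<longrightarrow> HSP_via ICF I F A)
       \<and> (\<forall>(I :: 'i set) (F :: 'i \<Rightarrow> 'k icalg). HSP_via ICF I F A \<longrightarrow>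
            (\<exists>(J :: ('a \<times> 'a) set) (G :: 'a \<times> 'a \<Rightarrow> 'a icalg). ISP_via ICF J G A))
       \<and> is_discriminator_term (ICF :: 'k icalg \<Rightarrow> bool) disc_t"
proof (intro conjI allI impI)
  fix I :: "'i set" and F :: "'i \<Rightarrow> 'k icalg"
  assume "ISP_via ICF I F A"
  then show "HSP_via ICF I F A" by (rule part1)
next
  fix I :: "'i set" and F :: "'i \<Rightarrow> 'k icalg"
  assume "HSP_via ICF I F A"
  then show "\<exists>(J :: ('a \<times> 'a) set) (G :: 'a \<times> 'a \<Rightarrow> 'a icalg). ISP_via ICF J G A" by (rule part2)
next
  show "is_discriminator_term (ICF :: 'k icalg \<Rightarrow> bool) disc_t" by (rule part3)
qed

end
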